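(* Let $n$ be a positive integer that is a multiple of $3$. If the Aztec diamond $\operatorname{AD}(n)$ has a cover by L-trominoes, then $\operatorname{AD}(n+2)$ has a cover by L-trominoes.
   Context: A cell is a unit square $[i,i+1]\times[j,j+1]$ with $i,j\in\mathbb{Z}$. An L-tromino is a set of three cells equal to a $2\times 2$ block of cells with one cell removed. A cover of a region $R$ (a finite edge-connected set of cells) is a set of pairwise disjoint L-trominoes contained in $R$ whose union is $R$. The Aztec diamond $\operatorname{AD}(n)$ is the union of the cells $[a,a+1]\times[b,b+1]$, $a,b\in\mathbb{Z}$, lying completely inside $\{(x,y): |x|+|y|\le n+1\}$. *)

theory Defs
  imports Main
begin

text \<open>A cell [i,i+1] x [j,j+1] is represented by its lower-left corner (i,j).\<close>
type_synonym cell = "int \<times> int"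

definition block2 :: "int \<Rightarrow> int \<Rightarrow> cell set" where
  "block2 i j = {(i,j), (i+1,j), (i,j+1), (i+1,j+1)}"

definition is_L_tromino :: "cell set \<Rightarrow> bool" where
  "is_L_tromino T \<longleftrightarrow> (\<exists>i j c. c \<in> block2 i j \<and> T = block2 i j - {c})"

definition is_cover :: "cell set \<Rightarrow> cell set set \<Rightarrow> bool" where
  "is_cover R C \<longleftrightarrow>
     (\<forall>T\<in>C. is_L_tromino T \<and> T \<subseteq> R) \<and>
     (\<forall>T\<in>C. \<forall>T'\<in>C. T \<noteq> T' \<longrightarrow> T \<inter> T' = {}) \<and>
     \<Union>C = R"

text \<open>Aztec diamond: cells lying completely inside |x|+|y| <= n+1, i.e. all four
  corners of the (convex) unit square satisfy the inequality.\<close>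
definition AD :: "nat \<Rightarrow> cell set" where
  "AD n = {(a,b). \<forall>x\<in>{a, a+1}. \<forall>y\<in>{b, b+1}. \<bar>x\<bar> + \<bar>y\<bar> \<le> int n + 1}"

end

theory Submission
  imports Defs
begin

definition r1 :: "cell \<Rightarrow> cell" where "r1 = (\<lambda>(a,b). (-1-a, b))"
definition r2 :: "cell \<Rightarrow> cell" where "r2 = (\<lambda>(a,b). (a, -1-b))"

lemma inj_r1: "inj r1" by (auto simp: inj_def r1_def)
lemma inj_r2: "inj r2" by (auto simp: inj_def r2_def)

lemma r1_block: "r1 ` block2 i j = block2 (-2-i) j"
  by (auto simp: r1_def block2_def image_iff)
lemma r2_block: "r2 ` block2 i j = block2 i (-2-j)"
  by (auto simp: r2_def block2_def image_iff)

lemma L_r1: "is_L_tromino T \<Longrightarrow> is_L_tromino (r1 ` T)"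
proof -
  assume "is_L_tromino T"
  then obtain i j c where c: "c \<in> block2 i j" "T = block2 i j - {c}"
    unfolding is_L_tromino_def by blast
  have e: "r1 ` T = r1 ` block2 i j - {r1 c}"
    using c(2) inj_r1 by (simp add: image_set_diff)
  have m: "r1 c \<in> block2 (-2-i) j" using c(1) r1_block by blast
  have "r1 ` T = block2 (-2-i) j - {r1 c}" using e r1_block by simp
  then show ?thesis unfolding is_L_tromino_def using m by blast
qed

lemma L_r2: "is_L_tromino T \<Longrightarrow> is_L_tromino (r2 ` T)"
proof -
  assume "is_L_tromino T"
  then obtain i j c where c: "c \<in> block2 i j" "T = block2 i j - {c}"
    unfolding is_L_tromino_def by blast
  have e: "r2 ` T = r2 ` block2 i j - {r2 c}"
    using c(2) inj_r2 by (simp add: image_set_diff)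
  have m: "r2 c \<in> block2 i (-2-j)" using c(1) r2_block by blast
  have "r2 ` T = block2 i (-2-j) - {r2 c}" using e r2_block by simp
  then show ?thesis unfolding is_L_tromino_def using m by blast
qed

lemma cover_image:
  assumes "inj g" "\<And>T. is_L_tromino T \<Longrightarrow> is_L_tromino (g ` T)" "is_cover R C"
  shows "is_cover (g ` R) ((`) g ` C)"
proof -
  have c1: "\<forall>T\<in>C. is_L_tromino T \<and> T \<subseteq> R" and c2: "\<forall>T\<in>C. \<forall>T'\<in>C. T \<noteq> T' \<longrightarrow> T \<inter> T' = {}"
    and c3: "\<Union>C = R" using assms(3) unfolding is_cover_def by blast+
  have d1: "\<forall>T\<in>(`) g ` C. is_L_tromino T \<and> T \<subseteq> g ` R"
  proof
    fix T assume "T \<in> (`) g ` C"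
    then obtain S where S: "S \<in> C" "T = g ` S" by blast
    thus "is_L_tromino T \<and> T \<subseteq> g ` R" using c1 assms(2) by blast
  qed
  have d2: "\<forall>T\<in>(`) g ` C. \<forall>T'\<in>(`) g ` C. T \<noteq> T' \<longrightarrow> T \<inter> T' = {}"
  proof (intro ballI impI)
    fix T T' assume "T \<in> (`) g ` C" "T' \<in> (`) g ` C" "T \<noteq> T'"
    then obtain S S' where S: "S \<in> C" "T = g ` S" "S' \<in> C" "T' = g ` S'" by blast
    with \<open>T \<noteq> T'\<close> have "S \<inter> S' = {}" using c2 by blast
    hence "g ` S \<inter> g ` S' = {}" using assms(1) by (simp add: image_Int[symmetric])
    thus "T \<inter> T' = {}" using S by simp
  qed
  have d3: "\<Union>((`) g ` C) = g ` R" using c3 by blast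
  show ?thesis unfolding is_cover_def using d1 d2 d3 by blast
qed

lemma cover_union:
  assumes "is_cover A C" "is_cover B D" "A \<inter> B = {}"
  shows "is_cover (A \<union> B) (C \<union> D)"
proof -
  have a1: "\<forall>T\<in>C. is_L_tromino T \<and> T \<subseteq> A" and a2: "\<forall>T\<in>C. \<forall>T'\<in>C. T \<noteq> T' \<longrightarrow> T \<inter> T' = {}"
    and a3: "\<Union>C = A" using assms(1) unfolding is_cover_def by blast+
  have b1: "\<forall>T\<in>D. is_L_tromino T \<and> T \<subseteq> B" and b2: "\<forall>T\<in>D. \<forall>T'\<in>D. T \<noteq> T' \<longrightarrow> T \<inter> T' = {}"
    and b3: "\<Union>D = B" using assms(2) unfolding is_cover_def by blast+
  have d1: "\<forall>T\<in>C \<union> D. is_L_tromino T \<and> T \<subseteq> A \<union> B" using a1 b1 by blast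
  have d2: "\<forall>T\<in>C \<union> D. \<forall>T'\<in>C \<union> D. T \<noteq> T' \<longrightarrow> T \<inter> T' = {}"
  proof (intro ballI impI)
    fix T T' assume T: "T \<in> C \<union> D" "T' \<in> C \<union> D" "T \<noteq> T'"
    show "T \<inter> T' = {}"
    proof (cases "T \<in> C")
      case True
      show ?thesis
      proof (cases "T' \<in> C")
        case True
        then show ?thesis using a2 T \<open>T \<in> C\<close> by blast
      next
        case False
        then have "T' \<subseteq> B" using T b1 by blast
        moreover have "T \<subseteq> A" using a1 \<open>T \<in> C\<close> by blast
        ultimately show ?thesis using assms(3) by blast
      qed
    next
      case False
      then have TB: "T \<subseteq> B" "T \<in> D" using T b1 by blast+
      show ?thesis
      proof (cases "T' \<in> C")
        case True
        then have "T' \<subseteq> A" using a1 by blast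
        then show ?thesis using TB assms(3) by blast
      next
        case False
        then show ?thesis using b2 T TB by blast
      qed
    qed
  qed
  have d3: "\<Union>(C \<union> D) = A \<union> B" using a3 b3 by blast
  show ?thesis unfolding is_cover_def using d1 d2 d3 by blast
qed

definition Q :: "nat \<Rightarrow> cell set" where
  "Q n = {(a,b). a \<ge> 0 \<and> b \<ge> 0 \<and> (a+b = int n \<or> a+b = int n + 1)}"

definition pp :: "nat \<Rightarrow> int \<Rightarrow> cell" where
  "pp n t = (t div 2, int n + 1 - (t+1) div 2)"

lemma pp_inj: "pp n s = pp n t \<Longrightarrow> s = t"
  unfolding pp_def by (simp, presburger)

lemma Q_pp: "Q n = pp n ` {0..2*int n+2}"
proof
  show "Q n \<subseteq> pp n ` {0..2*int n+2}"
  proof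
    fix x assume "x \<in> Q n"
    then obtain a b where x: "x = (a,b)" "a \<ge> 0" "b \<ge> 0" "a+b = int n \<or> a+b = int n + 1"
      unfolding Q_def by auto
    show "x \<in> pp n ` {0..2*int n+2}"
    proof (cases "a+b = int n + 1")
      case True
      hence e: "x = pp n (2*a)" using x unfolding pp_def by simp
      have "2*a \<in> {0..2*int n+2}" using x True by auto
      thus ?thesis using e by blast
    next
      case False
      hence e: "x = pp n (2*a+1)" using x unfolding pp_def by simp
      have "2*a+1 \<in> {0..2*int n+2}" using x False by auto
      thus ?thesis using e by blast
    qed
  qed
  show "pp n ` {0..2*int n+2} \<subseteq> Q n"
    unfolding Q_def pp_def by (auto; presburger)
qed

definition PT :: "nat \<Rightarrow> int \<Rightarrow> cell set" where
  "PT n j = pp n ` {3*j, 3*j+1, 3*j+2}"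

lemma pp_even: "pp n (2*s) = (s, int n + 1 - s)" unfolding pp_def by simp
lemma pp_odd: "pp n (2*s+1) = (s, int n - s)" unfolding pp_def by simp
lemma pp_even2: "pp n (2*s+2) = (s+1, int n - s)"
proof -
  have "pp n (2*(s+1)) = (s+1, int n + 1 - (s+1))" by (rule pp_even)
  thus ?thesis by (simp add: algebra_simps)
qed
lemma pp_odd2: "pp n (2*s+3) = (s+1, int n - s - 1)"
proof -
  have "pp n (2*(s+1)+1) = (s+1, int n - (s+1))" by (rule pp_odd)
  thus ?thesis by (simp add: algebra_simps)
qed

lemma L_witness: "c \<in> block2 i j \<Longrightarrow> is_L_tromino (block2 i j - {c})"
  unfolding is_L_tromino_def by blast

lemma PT_L: "is_L_tromino (PT n j)"
proof (cases "even j")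
  case True
  define s where "s = 3*j div 2"
  have s: "3*j = 2*s" unfolding s_def using True by presburger
  have i: "{3*j, 3*j+1, 3*j+2} = {2*s, 2*s+1, 2*s+2}" using s by simp
  have "PT n j = {pp n (2*s), pp n (2*s+1), pp n (2*s+2)}"
    unfolding PT_def i by simp
  also have "\<dots> = block2 s (int n - s) - {(s+1, int n+1-s)}"
    unfolding pp_even pp_odd pp_even2 block2_def by auto
  finally show ?thesis using L_witness[of "(s+1, int n+1-s)" s "int n - s"]
    by (simp add: block2_def)
next
  case False
  define s where "s = 3*j div 2"
  have s: "3*j = 2*s+1" unfolding s_def using False by presburger
  have i: "{3*j, 3*j+1, 3*j+2} = {2*s+1, 2*s+2, 2*s+3}" using s by (simp add: add.commute)
  have "PT n j = {pp n (2*s+1), pp n (2*s+2), pp n (2*s+3)}"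
    unfolding PT_def i by simp
  also have "\<dots> = block2 s (int n - s - 1) - {(s, int n-s-1)}"
    unfolding pp_odd pp_even2 pp_odd2 block2_def by auto
  finally show ?thesis using L_witness[of "(s, int n-s-1)" s "int n - s - 1"]
    by (simp add: block2_def)
qed

lemma Q_cover:
  assumes "3 dvd n"
  shows "is_cover (Q n) (PT n ` {0..<(2*int n+3) div 3})"
proof -
  obtain k where k: "n = 3*k" using assms by blast
  have U: "\<Union>(PT n ` {0..<(2*int n+3) div 3}) = Q n"
  proof -
    have "\<Union>(PT n ` {0..<(2*int n+3) div 3}) = pp n ` (\<Union>j\<in>{0..<(2*int n+3) div 3}. {3*j, 3*j+1, 3*j+2})"
      unfolding PT_def by auto
    also have "(\<Union>j\<in>{0..<(2*int n+3) div 3}. {3*j, 3*j+1, 3*j+2}) = {0..2*int n+2}"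
    proof
      show "(\<Union>j\<in>{0..<(2*int n+3) div 3}. {3*j, 3*j+1, 3*j+2}) \<subseteq> {0..2*int n+2}"
        using k by auto
      show "{0..2*int n+2} \<subseteq> (\<Union>j\<in>{0..<(2*int n+3) div 3}. {3*j, 3*j+1, 3*j+2})"
      proof
        fix t assume t: "t \<in> {0..2*int n+2}"
        have "t div 3 \<in> {0..<(2*int n+3) div 3}" using t k by auto
        moreover have "t \<in> {3*(t div 3), 3*(t div 3)+1, 3*(t div 3)+2}" by (simp; presburger)
        ultimately show "t \<in> (\<Union>j\<in>{0..<(2*int n+3) div 3}. {3*j, 3*j+1, 3*j+2})" by blast
      qed
    qed
    finally show ?thesis using Q_pp by simp
  qed
  have D: "PT n i \<inter> PT n j = {}" if "PT n i \<noteq> PT n j" for i j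
  proof (rule ccontr)
    assume "PT n i \<inter> PT n j \<noteq> {}"
    then obtain s t where st: "s \<in> {3*i, 3*i+1, 3*i+2}" "t \<in> {3*j, 3*j+1, 3*j+2}" "pp n s = pp n t"
      unfolding PT_def by blast
    have "s = t" using st(3) by (rule pp_inj)
    moreover have "i = s div 3" using st(1) by auto
    moreover have "j = t div 3" using st(2) by auto
    ultimately have "i = j" by simp
    thus False using that by simp
  qed
  show ?thesis unfolding is_cover_def
  proof (intro conjI ballI impI)
    fix T assume T: "T \<in> PT n ` {0..<(2*int n+3) div 3}"
    then obtain j where j: "T = PT n j" by blast
    show "is_L_tromino T" unfolding j by (rule PT_L)
  next
    fix T assume T: "T \<in> PT n ` {0..<(2*int n+3) div 3}"
    have "T \<subseteq> \<Union>(PT n ` {0..<(2*int n+3) div 3})" using T by (rule Union_upper)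
    thus "T \<subseteq> Q n" using U by simp
  next
    fix T T' assume "T \<in> PT n ` {0..<(2*int n+3) div 3}" "T' \<in> PT n ` {0..<(2*int n+3) div 3}" "T \<noteq> T'"
    then obtain i j where "T = PT n i" "T' = PT n j" by blast
    then show "T \<inter> T' = {}" using D \<open>T \<noteq> T'\<close> by simp
  next
    show "\<Union>(PT n ` {0..<(2*int n+3) div 3}) = Q n" by (rule U)
  qed
qed

lemma r1_mem: "x \<in> r1 ` S \<longleftrightarrow> r1 x \<in> S"
proof -
  have "r1 (r1 x) = x" for x by (auto simp: r1_def split: prod.splits)
  thus ?thesis by (metis image_iff)
qed

lemma r2_mem: "x \<in> r2 ` S \<longleftrightarrow> r2 x \<in> S"
proof -
  have "r2 (r2 x) = x" for x by (auto simp: r2_def split: prod.splits)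
  thus ?thesis by (metis image_iff)
qed

lemma AD_mem: "(a,b) \<in> AD n \<longleftrightarrow> \<bar>a\<bar>+\<bar>b\<bar> \<le> int n+1 \<and> \<bar>a+1\<bar>+\<bar>b\<bar> \<le> int n+1
   \<and> \<bar>a\<bar>+\<bar>b+1\<bar> \<le> int n+1 \<and> \<bar>a+1\<bar>+\<bar>b+1\<bar> \<le> int n+1"
  unfolding AD_def by auto

lemma r1_app: "r1 (a,b) = (-1-a, b)" by (simp add: r1_def)
lemma r2_app: "r2 (a,b) = (a, -1-b)" by (simp add: r2_def)

definition ff :: "int \<Rightarrow> int" where "ff a = (if a \<ge> 0 then a else -1-a)"

lemma AD_mem2: "(a,b) \<in> AD n \<longleftrightarrow> ff a + ff b \<le> int n - 1"
  unfolding AD_mem ff_def by (cases "a \<ge> 0"; cases "b \<ge> 0"; simp; arith)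

lemma Q_mem: "(a,b) \<in> Q n \<longleftrightarrow> a \<ge> 0 \<and> b \<ge> 0 \<and> (a+b = int n \<or> a+b = int n + 1)"
  by (simp add: Q_def)

lemma ring_decomp:
  "AD (n+2) = AD n \<union> Q n \<union> r1 ` Q n \<union> r2 ` Q n \<union> r1 ` r2 ` Q n"
proof (rule set_eqI)
  fix x :: cell
  obtain a b where x: "x = (a,b)" by fastforce
  show "x \<in> AD (n+2) \<longleftrightarrow> x \<in> AD n \<union> Q n \<union> r1 ` Q n \<union> r2 ` Q n \<union> r1 ` r2 ` Q n"
    unfolding x Un_iff r1_mem r2_mem r1_app r2_app AD_mem2 Q_mem ff_def
    by (cases "a \<ge> 0"; cases "b \<ge> 0"; simp; arith)
qed

lemma ring_disj:
  "AD n \<inter> (Q n \<union> r1 ` Q n \<union> r2 ` Q n \<union> r1 ` r2 ` Q n) = {}"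
  "Q n \<inter> (r1 ` Q n \<union> r2 ` Q n \<union> r1 ` r2 ` Q n) = {}"
  "r1 ` Q n \<inter> (r2 ` Q n \<union> r1 ` r2 ` Q n) = {}"
  "r2 ` Q n \<inter> r1 ` r2 ` Q n = {}"
  by (rule set_eqI, clarsimp simp only: Int_iff Un_iff r1_mem r2_mem r1_app r2_app AD_mem2 Q_mem ff_def empty_iff,
      (case_tac "a \<ge> 0"; case_tac "b \<ge> 0"; simp; arith))+

theorem corollary2:
  fixes n :: nat
  assumes "n > 0" and "3 dvd n"
    and "\<exists>C. is_cover (AD n) C"
  shows "\<exists>C. is_cover (AD (n + 2)) C"
proof -
  obtain C where C: "is_cover (AD n) C" using assms by blast
  define D where "D = PT n ` {0..<(2*int n+3) div 3}"
  have D: "is_cover (Q n) D" using Q_cover assms D_def by simp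
  have D1: "is_cover (r1 ` Q n) ((`) r1 ` D)" by (rule cover_image[OF inj_r1 L_r1 D])
  have D2: "is_cover (r2 ` Q n) ((`) r2 ` D)" by (rule cover_image[OF inj_r2 L_r2 D])
  have D3: "is_cover (r1 ` r2 ` Q n) ((`) r1 ` (`) r2 ` D)" by (rule cover_image[OF inj_r1 L_r1 D2])
  have "is_cover (r2 ` Q n \<union> r1 ` r2 ` Q n) ((`) r2 ` D \<union> (`) r1 ` (`) r2 ` D)"
    using cover_union[OF D2 D3] ring_disj by blast
  then have "is_cover (r1 ` Q n \<union> (r2 ` Q n \<union> r1 ` r2 ` Q n)) ((`) r1 ` D \<union> ((`) r2 ` D \<union> (`) r1 ` (`) r2 ` D))"
    using cover_union[OF D1] ring_disj by blast
  then have "is_cover (Q n \<union> (r1 ` Q n \<union> (r2 ` Q n \<union> r1 ` r2 ` Q n))) (D \<union> ((`) r1 ` D \<union> ((`) r2 ` D \<union> (`) r1 ` (`) r2 ` D)))"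
    using cover_union[OF D] ring_disj by (simp add: Un_assoc)
  then have "is_cover (AD n \<union> (Q n \<union> (r1 ` Q n \<union> (r2 ` Q n \<union> r1 ` r2 ` Q n)))) (C \<union> (D \<union> ((`) r1 ` D \<union> ((`) r2 ` D \<union> (`) r1 ` (`) r2 ` D))))"
    using cover_union[OF C] ring_disj by (simp add: Un_assoc)
  then show ?thesis using ring_decomp by (metis Un_assoc)
qed

end
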